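(* Let $(X,\preceq,\{H_n\})$ be a half-space order and let a group $G$ act on $X$ unboundedly by quasi-automorphisms of defect bounded by $d$. Then there is a nonzero homogeneous quasimorphism $T_{(X,\preceq,\{H_n\})}:G\to\mathbb{R}$ of defect at most $2d$ such that for every $a\in X$ and $g\in G$, $$T_{(X,\preceq,\{H_n\})}(g)=\lim_{n\to\infty}\frac{h(g^na,a)}{n}.$$
   Context: A half-space filtration of $X$ is $\{H_n\}_{n\in\mathbb{Z}}$ with $H_{n+1}\subsetneq H_n$, $\bigcap H_n=\emptyset$, $\bigcup H_n=X$; height $h(a)=\sup\{n: a\in H_n\}$, $h(a,b)=h(a)-h(b)$. A half-space order $(X,\preceq,\{H_n\})$: $(X,\preceq)$ a poset, $\{H_n\}$ a half-space filtration, and for a constant $w$, $h(a,b)\geq w\Rightarrow a\succeq b$. The $G$-action is by quasi-automorphisms of defect bounded by $d$ if $|h(ga,gb)-h(a,b)|\leq d$ for all $g,a,b$; it is unbounded if there exist $g\in G$, $a\in X$ with $h(g^na)\to\pm\infty$ as $n\to\pm\infty$. A homogeneous quasimorphism is $f:G\to\mathbb{R}$ with defect $\sup_{g,k}|f(gk)-f(g)-f(k)|<\infty$ and $f(g^n)=nf(g)$ for $n\in\mathbb{N}$. *)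

theory Defs
  imports Complex_Main "HOL-Algebra.Group_Action"
begin

definition half_space_filtration :: "'x set \<Rightarrow> (int \<Rightarrow> 'x set) \<Rightarrow> bool" where
  "half_space_filtration X H \<longleftrightarrow>
     (\<forall>n. H (n + 1) \<subset> H n) \<and> (\<Inter>n. H n) = {} \<and> (\<Union>n. H n) = X"

definition height :: "(int \<Rightarrow> 'x set) \<Rightarrow> 'x \<Rightarrow> int" where
  "height H a = Sup {n. a \<in> H n}"

definition rel_height :: "(int \<Rightarrow> 'x set) \<Rightarrow> 'x \<Rightarrow> 'x \<Rightarrow> int" where
  "rel_height H a b = height H a - height H b"

definition partial_order_on_set :: "'x set \<Rightarrow> ('x \<Rightarrow> 'x \<Rightarrow> bool) \<Rightarrow> bool" where
  "partial_order_on_set X leq \<longleftrightarrow>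
     (\<forall>a\<in>X. leq a a) \<and>
     (\<forall>a\<in>X. \<forall>b\<in>X. leq a b \<and> leq b a \<longrightarrow> a = b) \<and>
     (\<forall>a\<in>X. \<forall>b\<in>X. \<forall>c\<in>X. leq a b \<and> leq b c \<longrightarrow> leq a c)"

definition half_space_order :: "'x set \<Rightarrow> ('x \<Rightarrow> 'x \<Rightarrow> bool) \<Rightarrow> (int \<Rightarrow> 'x set) \<Rightarrow> bool" where
  "half_space_order X leq H \<longleftrightarrow>
     partial_order_on_set X leq \<and> half_space_filtration X H \<and>
     (\<exists>w::int. \<forall>a\<in>X. \<forall>b\<in>X. rel_height H a b \<ge> w \<longrightarrow> leq b a)"

definition quasi_aut_action ::
  "('g, 'm) monoid_scheme \<Rightarrow> 'x set \<Rightarrow> ('x \<Rightarrow> 'x \<Rightarrow> bool) \<Rightarrow> (int \<Rightarrow> 'x set)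
     \<Rightarrow> ('g \<Rightarrow> 'x \<Rightarrow> 'x) \<Rightarrow> real \<Rightarrow> bool" where
  "quasi_aut_action G X leq H \<phi> d \<longleftrightarrow>
     group_action G X \<phi> \<and>
     (\<forall>g\<in>carrier G. \<forall>a\<in>X. \<forall>b\<in>X. leq a b \<longrightarrow> leq (\<phi> g a) (\<phi> g b)) \<and>
     (\<forall>g\<in>carrier G. \<forall>a\<in>X. \<forall>b\<in>X.
        \<bar>real_of_int (rel_height H (\<phi> g a) (\<phi> g b) - rel_height H a b)\<bar> \<le> d)"

definition unbounded_action ::
  "('g, 'm) monoid_scheme \<Rightarrow> 'x set \<Rightarrow> (int \<Rightarrow> 'x set) \<Rightarrow> ('g \<Rightarrow> 'x \<Rightarrow> 'x) \<Rightarrow> bool" where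
  "unbounded_action G X H \<phi> \<longleftrightarrow>
     (\<exists>g\<in>carrier G. \<exists>a\<in>X.
        (filterlim (\<lambda>n::int. height H (\<phi> (g [^]\<^bsub>G\<^esub> n) a)) at_top at_top \<and>
         filterlim (\<lambda>n::int. height H (\<phi> (g [^]\<^bsub>G\<^esub> n) a)) at_bot at_bot) \<or>
        (filterlim (\<lambda>n::int. height H (\<phi> (g [^]\<^bsub>G\<^esub> n) a)) at_bot at_top \<and>
         filterlim (\<lambda>n::int. height H (\<phi> (g [^]\<^bsub>G\<^esub> n) a)) at_top at_bot))"

definition homogeneous_quasimorphism_defect_le ::
  "('g, 'm) monoid_scheme \<Rightarrow> ('g \<Rightarrow> real) \<Rightarrow> real \<Rightarrow> bool" where
  "homogeneous_quasimorphism_defect_le G f D \<longleftrightarrow>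
     (\<forall>g\<in>carrier G. \<forall>k\<in>carrier G. \<bar>f (g \<otimes>\<^bsub>G\<^esub> k) - f g - f k\<bar> \<le> D) \<and>
     (\<forall>g\<in>carrier G. \<forall>n::nat. f (g [^]\<^bsub>G\<^esub> n) = real n * f g)"

end

theory Submission
  imports Defs
begin

lemma lim_bound:
  fixes b :: "nat \<Rightarrow> real"
  assumes "(\<lambda>n. b n / real n) \<longlonglongrightarrow> L" "\<And>n. n \<ge> 1 \<Longrightarrow> \<bar>b n - real n * c\<bar> \<le> real n * e"
  shows "\<bar>L - c\<bar> \<le> e"
proof -
  have "(\<lambda>n. \<bar>b n / real n - c\<bar>) \<longlonglongrightarrow> \<bar>L - c\<bar>"
    by (intro tendsto_intros assms(1))
  moreover have "\<forall>n\<ge>1. \<bar>b n / real n - c\<bar> \<le> e"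
  proof (intro allI impI)
    fix n :: nat assume n: "n \<ge> 1"
    then have np: "real n > 0" by simp
    have "b n / real n - c = (b n - real n * c) / real n" using np by (simp add: field_simps)
    then have "\<bar>b n / real n - c\<bar> = \<bar>b n - real n * c\<bar> / real n" using np by simp
    also have "\<dots> \<le> real n * e / real n" using assms(2)[OF n] np
      by (intro divide_right_mono) auto
    also have "\<dots> = e" using np by simp
    finally show "\<bar>b n / real n - c\<bar> \<le> e" .
  qed
  ultimately show ?thesis by (intro LIMSEQ_le_const2) auto
qed

lemma sum_dev:
  fixes f :: "nat \<Rightarrow> real"
  assumes "\<And>j. j < n \<Longrightarrow> \<bar>f j - c\<bar> \<le> e"
  shows "\<bar>(\<Sum>j<n. f j) - real n * c\<bar> \<le> real n * e"
  using assms
proof (induction n)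
  case 0 then show ?case by simp
next
  case (Suc n)
  have h1: "\<bar>(\<Sum>j<n. f j) - real n * c\<bar> \<le> real n * e" using Suc by auto
  have h2: "\<bar>f n - c\<bar> \<le> e" using Suc by auto
  have eq: "(\<Sum>j<Suc n. f j) - real (Suc n) * c = ((\<Sum>j<n. f j) - real n * c) + (f n - c)"
    by (simp add: algebra_simps)
  have "\<bar>(\<Sum>j<Suc n. f j) - real (Suc n) * c\<bar> \<le> \<bar>(\<Sum>j<n. f j) - real n * c\<bar> + \<bar>f n - c\<bar>"
    unfolding eq by (rule abs_triangle_ineq)
  also have "\<dots> \<le> real n * e + e" using h1 h2 by simp
  also have "\<dots> = real (Suc n) * e" by (simp add: algebra_simps)
  finally show ?case .
qed


lemma div_eq_aux:
  fixes x y :: real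
  assumes "m \<ge> 1" "n \<ge> 1"
  shows "\<bar>x / real (m*n) - y / real n\<bar> = \<bar>x - real m * y\<bar> / real (m*n)"
proof -
  have p: "real m > 0" "real n > 0" using assms by auto
  have "x / real (m*n) - y / real n = (x - real m * y) / real (m*n)"
    using p by (simp add: field_simps)
  then show ?thesis using p by simp
qed

lemma quasi_add_conv:
  fixes b :: "nat \<Rightarrow> real"
  assumes b0: "b 0 = 0" and q: "\<And>m n. \<bar>b (m + n) - b m - b n\<bar> \<le> D"
  shows "convergent (\<lambda>n. b n / real n)"
proof -
  have D0: "D \<ge> 0" using q[of 0 0] b0 by simp
  have mult: "\<bar>b (k * n) - real k * b n\<bar> \<le> real k * D" for k n
  proof (induction k)
    case 0 then show ?case using b0 by simp
  next
    case (Suc k)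
    have h: "\<bar>b (k * n + n) - b (k*n) - b n\<bar> \<le> D" by (rule q)
    have eq: "b (Suc k * n) - real (Suc k) * b n = (b (k * n + n) - b (k*n) - b n) + (b (k*n) - real k * b n)"
      by (simp add: algebra_simps)
    have "\<bar>b (Suc k * n) - real (Suc k) * b n\<bar> \<le> \<bar>b (k * n + n) - b (k*n) - b n\<bar> + \<bar>b (k*n) - real k * b n\<bar>"
      unfolding eq by (rule abs_triangle_ineq)
    also have "\<dots> \<le> D + real k * D" using h Suc by simp
    also have "\<dots> = real (Suc k) * D" by (simp add: algebra_simps)
    finally show ?case .
  qed
  have step: "\<bar>b n / real n - b m / real m\<bar> \<le> D / real n + D / real m"
    if "n \<ge> 1" "m \<ge> 1" for n m
  proof -
    have p: "real m > 0" "real n > 0" using that by auto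
    have m1: "\<bar>b (m * n) - real m * b n\<bar> \<le> real m * D" by (rule mult)
    have m2: "\<bar>b (n * m) - real n * b m\<bar> \<le> real n * D" by (rule mult)
    have e1: "\<bar>b (m*n) / real (m*n) - b n / real n\<bar> \<le> D / real n"
    proof -
      have "\<bar>b (m*n) / real (m*n) - b n / real n\<bar> = \<bar>b (m * n) - real m * b n\<bar> / real (m*n)"
        by (rule div_eq_aux) (use that in auto)
      also have "\<dots> \<le> real m * D / real (m*n)" using m1 by (intro divide_right_mono) auto
      also have "\<dots> = D / real n" using p by simp
      finally show ?thesis .
    qed
    have e2: "\<bar>b (n*m) / real (n*m) - b m / real m\<bar> \<le> D / real m"
    proof -
      have "\<bar>b (n*m) / real (n*m) - b m / real m\<bar> = \<bar>b (n * m) - real n * b m\<bar> / real (n*m)"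
        by (rule div_eq_aux) (use that in auto)
      also have "\<dots> \<le> real n * D / real (n*m)" using m2 by (intro divide_right_mono) auto
      also have "\<dots> = D / real m" using p by simp
      finally show ?thesis .
    qed
    have "n * m = m * n" by simp
    then show ?thesis using e1 e2 by (smt (verit))
  qed
  have "Cauchy (\<lambda>n. b n / real n)"
  proof (rule metric_CauchyI)
    fix e :: real assume e: "e > 0"
    obtain M0 :: nat where M0: "real M0 > 2 * D / e"
      using reals_Archimedean2 by blast
    define M where "M = max M0 1"
    have M: "M \<ge> 1" "real M > 2 * D / e" using M0 unfolding M_def by auto
    have DM: "D / real k < e / 2" if "k \<ge> M" for k
    proof -
      have "2 * D < e * real M" using M(2) e by (simp add: field_simps)
      also have "\<dots> \<le> e * real k" using that e by simp
      finally have "2 * D < e * real k" .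
      moreover have "real k > 0" using that M by simp
      ultimately show ?thesis by (simp add: field_simps)
    qed
    show "\<exists>M. \<forall>m\<ge>M. \<forall>n\<ge>M. dist (b m / real m) (b n / real n) < e"
    proof (intro exI allI impI)
      fix m n assume mn: "m \<ge> M" "n \<ge> M"
      have "\<bar>b m / real m - b n / real n\<bar> \<le> D / real m + D / real n"
        by (rule step) (use mn M in auto)
      then show "dist (b m / real m) (b n / real n) < e"
        using DM[OF mn(1)] DM[OF mn(2)] unfolding dist_real_def by linarith
    qed
  qed
  then show ?thesis by (simp add: Cauchy_convergent_iff)
qed


theorem corollary2p2:
  fixes G :: "('g, 'm) monoid_scheme" and X :: "'x set"
    and leq :: "'x \<Rightarrow> 'x \<Rightarrow> bool" and H :: "int \<Rightarrow> 'x set"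
    and \<phi> :: "'g \<Rightarrow> 'x \<Rightarrow> 'x" and d :: real
  assumes "group G"
    and "half_space_order X leq H"
    and "quasi_aut_action G X leq H \<phi> d"
    and "unbounded_action G X H \<phi>"
  shows "\<exists>T :: 'g \<Rightarrow> real.
           homogeneous_quasimorphism_defect_le G T (2 * d) \<and>
           (\<exists>g\<in>carrier G. T g \<noteq> 0) \<and>
           (\<forall>a\<in>X. \<forall>g\<in>carrier G.
              (\<lambda>n::nat. real_of_int (rel_height H (\<phi> (g [^]\<^bsub>G\<^esub> n) a) a) / real n)
                \<longlonglongrightarrow> T g)"
proof -
  interpret grp: group G by (rule assms(1))
  interpret ga: group_action G X \<phi> using assms(3) unfolding quasi_aut_action_def by auto
  define \<delta> where "\<delta> g x = real_of_int (height H (\<phi> g x) - height H x)" for g x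
  have dbd: "\<bar>\<delta> g a - \<delta> g b\<bar> \<le> d" if "g \<in> carrier G" "a \<in> X" "b \<in> X" for g a b
    using assms(3) that unfolding quasi_aut_action_def rel_height_def \<delta>_def
    by (auto simp: algebra_simps)
  have img: "\<phi> g x \<in> X" if "g \<in> carrier G" "x \<in> X" for g x
    using ga.element_image that by blast
  have one: "\<phi> \<one>\<^bsub>G\<^esub> x = x" if "x \<in> X" for x
    using ga.id_eq_one that by (metis restrict_apply')
  have comp: "\<delta> (g \<otimes>\<^bsub>G\<^esub> k) x = \<delta> g (\<phi> k x) + \<delta> k x"
    if "g \<in> carrier G" "k \<in> carrier G" "x \<in> X" for g k x
    using ga.composition_rule[OF that(3,1,2)] unfolding \<delta>_def by simp
  have pow_sum: "\<delta> (g [^]\<^bsub>G\<^esub> n) x = (\<Sum>j<n. \<delta> g (\<phi> (g [^]\<^bsub>G\<^esub> j) x))"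
    if "g \<in> carrier G" "x \<in> X" for g x and n :: nat
  proof (induction n)
    case 0 then show ?case using one[OF that(2)] by (simp add: \<delta>_def)
  next
    case (Suc n)
    have "\<delta> (g [^]\<^bsub>G\<^esub> Suc n) x = \<delta> g (\<phi> (g [^]\<^bsub>G\<^esub> n) x) + \<delta> (g [^]\<^bsub>G\<^esub> n) x"
      using grp.nat_pow_Suc2[OF that(1)] comp[OF that(1) grp.nat_pow_closed[OF that(1)] that(2)] by simp
    then show ?case using Suc by simp
  qed
  have addq: "\<delta> (g [^]\<^bsub>G\<^esub> (m + n)) x = \<delta> (g [^]\<^bsub>G\<^esub> m) (\<phi> (g [^]\<^bsub>G\<^esub> n) x) + \<delta> (g [^]\<^bsub>G\<^esub> n) x"
    if "g \<in> carrier G" "x \<in> X" for g x and m n :: nat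
  proof -
    have "g [^]\<^bsub>G\<^esub> (m + n) = g [^]\<^bsub>G\<^esub> m \<otimes>\<^bsub>G\<^esub> g [^]\<^bsub>G\<^esub> n"
      using grp.nat_pow_mult[OF that(1), of m n] by simp
    then show ?thesis
      using comp[OF grp.nat_pow_closed[OF that(1), where n=m] grp.nat_pow_closed[OF that(1), where n=n] that(2)]
      by simp
  qed
  obtain g0 a1 where g0: "g0 \<in> carrier G" and a1: "a1 \<in> X" and unb:
    "(filterlim (\<lambda>n::int. height H (\<phi> (g0 [^]\<^bsub>G\<^esub> n) a1)) at_top at_top) \<or>
     (filterlim (\<lambda>n::int. height H (\<phi> (g0 [^]\<^bsub>G\<^esub> n) a1)) at_bot at_top)"
    using assms(4) unfolding unbounded_action_def by blast
  define a0 where "a0 = a1"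
  have a0: "a0 \<in> X" using a1 a0_def by simp
  define T where "T g = lim (\<lambda>n. \<delta> (g [^]\<^bsub>G\<^esub> n) a0 / real n)" for g
  have convx: "convergent (\<lambda>n. \<delta> (g [^]\<^bsub>G\<^esub> n) x / real n)" if "g \<in> carrier G" "x \<in> X" for g x
  proof (rule quasi_add_conv[where D = d])
    show "\<delta> (g [^]\<^bsub>G\<^esub> (0::nat)) x = 0" using one[OF that(2)] by (simp add: \<delta>_def)
    fix m n :: nat
    show "\<bar>\<delta> (g [^]\<^bsub>G\<^esub> (m + n)) x - \<delta> (g [^]\<^bsub>G\<^esub> m) x - \<delta> (g [^]\<^bsub>G\<^esub> n) x\<bar> \<le> d"
      using addq[OF that, of m n] dbd[OF grp.nat_pow_closed[OF that(1)] img[OF grp.nat_pow_closed[OF that(1)] that(2)] that(2), of m]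
      by simp
  qed
  have conv: "(\<lambda>n. \<delta> (g [^]\<^bsub>G\<^esub> n) a0 / real n) \<longlonglongrightarrow> T g" if "g \<in> carrier G" for g
    using convx[OF that a0] unfolding T_def by (simp add: convergent_LIMSEQ_iff)
  have conv_all: "(\<lambda>n. \<delta> (g [^]\<^bsub>G\<^esub> n) a / real n) \<longlonglongrightarrow> T g" if "g \<in> carrier G" "a \<in> X" for g a
  proof -
    have "(\<lambda>n. \<delta> (g [^]\<^bsub>G\<^esub> n) a / real n - \<delta> (g [^]\<^bsub>G\<^esub> n) a0 / real n) \<longlonglongrightarrow> 0"
    proof (rule tendsto_sandwich[where f = "\<lambda>n. - d / real n" and h = "\<lambda>n. d / real n"])
      have bb: "- d / real n \<le> \<delta> (g [^]\<^bsub>G\<^esub> n) a / real n - \<delta> (g [^]\<^bsub>G\<^esub> n) a0 / real n \<and>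
          \<delta> (g [^]\<^bsub>G\<^esub> n) a / real n - \<delta> (g [^]\<^bsub>G\<^esub> n) a0 / real n \<le> d / real n" for n :: nat
      proof -
        have h: "\<bar>\<delta> (g [^]\<^bsub>G\<^esub> n) a - \<delta> (g [^]\<^bsub>G\<^esub> n) a0\<bar> \<le> d"
          by (rule dbd[OF grp.nat_pow_closed[OF that(1)] that(2) a0])
        have eq: "\<delta> (g [^]\<^bsub>G\<^esub> n) a / real n - \<delta> (g [^]\<^bsub>G\<^esub> n) a0 / real n
             = (\<delta> (g [^]\<^bsub>G\<^esub> n) a - \<delta> (g [^]\<^bsub>G\<^esub> n) a0) / real n"
          by (rule diff_divide_distrib[symmetric])
        have "- d \<le> \<delta> (g [^]\<^bsub>G\<^esub> n) a - \<delta> (g [^]\<^bsub>G\<^esub> n) a0" using h by linarith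
        then have 1: "- d / real n \<le> (\<delta> (g [^]\<^bsub>G\<^esub> n) a - \<delta> (g [^]\<^bsub>G\<^esub> n) a0) / real n"
          by (rule divide_right_mono) simp
        have "\<delta> (g [^]\<^bsub>G\<^esub> n) a - \<delta> (g [^]\<^bsub>G\<^esub> n) a0 \<le> d" using h by linarith
        then have 2: "(\<delta> (g [^]\<^bsub>G\<^esub> n) a - \<delta> (g [^]\<^bsub>G\<^esub> n) a0) / real n \<le> d / real n"
          by (rule divide_right_mono) simp
        show ?thesis unfolding eq using 1 2 by simp
      qed
      show "\<forall>\<^sub>F n in sequentially. - d / real n \<le> \<delta> (g [^]\<^bsub>G\<^esub> n) a / real n - \<delta> (g [^]\<^bsub>G\<^esub> n) a0 / real n"
        using bb by (intro always_eventually allI) blast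
      show "\<forall>\<^sub>F n in sequentially. \<delta> (g [^]\<^bsub>G\<^esub> n) a / real n - \<delta> (g [^]\<^bsub>G\<^esub> n) a0 / real n \<le> d / real n"
        using bb by (intro always_eventually allI) blast
      show "(\<lambda>n. - d / real n) \<longlonglongrightarrow> 0" by (intro tendsto_intros)
      show "(\<lambda>n. d / real n) \<longlonglongrightarrow> 0" by (intro tendsto_intros)
    qed
    from tendsto_add[OF this conv[OF that(1)]] show ?thesis by simp
  qed
  have pw: "\<bar>\<delta> g y - T g\<bar> \<le> d" if "g \<in> carrier G" "y \<in> X" for g y
  proof -
    have "\<bar>T g - \<delta> g y\<bar> \<le> d"
    proof (rule lim_bound[OF conv[OF that(1)]])
      fix n :: nat
      show "\<bar>\<delta> (g [^]\<^bsub>G\<^esub> n) a0 - real n * \<delta> g y\<bar> \<le> real n * d"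
        unfolding pow_sum[OF that(1) a0]
        by (rule sum_dev) (use dbd[OF that(1) img[OF grp.nat_pow_closed[OF that(1)] a0] that(2)] in auto)
    qed
    then show ?thesis by (simp add: abs_minus_commute)
  qed
  have hom: "T (g [^]\<^bsub>G\<^esub> m) = real m * T g" if "g \<in> carrier G" for g and m :: nat
  proof (cases "m = 0")
    case True
    have "(\<lambda>n. \<delta> ((g [^]\<^bsub>G\<^esub> m) [^]\<^bsub>G\<^esub> n) a0 / real n) = (\<lambda>n. 0)"
      using True one[OF a0] by (simp add: \<delta>_def)
    then have "(\<lambda>n. 0::real) \<longlonglongrightarrow> T (g [^]\<^bsub>G\<^esub> m)" using conv[OF grp.nat_pow_closed[OF that, where n=m]] by simp
    then show ?thesis using True LIMSEQ_unique[OF _ tendsto_const] by auto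
  next
    case False
    have sm: "strict_mono (\<lambda>n. m * n)" using False by (simp add: strict_mono_def)
    have "((\<lambda>n. \<delta> (g [^]\<^bsub>G\<^esub> n) a0 / real n) \<circ> (\<lambda>n. m * n)) \<longlonglongrightarrow> T g"
      by (rule LIMSEQ_subseq_LIMSEQ[OF conv[OF that] sm])
    then have "(\<lambda>n. real m * (\<delta> (g [^]\<^bsub>G\<^esub> (m * n)) a0 / real (m * n))) \<longlonglongrightarrow> real m * T g"
      by (intro tendsto_intros) (simp add: o_def)
    moreover have "(\<lambda>n. real m * (\<delta> (g [^]\<^bsub>G\<^esub> (m * n)) a0 / real (m * n))) =
        (\<lambda>n. \<delta> ((g [^]\<^bsub>G\<^esub> m) [^]\<^bsub>G\<^esub> n) a0 / real n)"
      using False by (auto simp: grp.nat_pow_pow[OF that] intro!: ext)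
    ultimately have "(\<lambda>n. \<delta> ((g [^]\<^bsub>G\<^esub> m) [^]\<^bsub>G\<^esub> n) a0 / real n) \<longlonglongrightarrow> real m * T g" by simp
    then show ?thesis using LIMSEQ_unique conv[OF grp.nat_pow_closed[OF that, where n=m]] by blast
  qed
  have defect: "\<bar>T (g \<otimes>\<^bsub>G\<^esub> k) - T g - T k\<bar> \<le> 2 * d" if "g \<in> carrier G" "k \<in> carrier G" for g k
  proof -
    have gk: "g \<otimes>\<^bsub>G\<^esub> k \<in> carrier G" using that by simp
    have "\<bar>T (g \<otimes>\<^bsub>G\<^esub> k) - (T g + T k)\<bar> \<le> 2 * d"
    proof (rule lim_bound[OF conv[OF gk]])
      fix n :: nat
      show "\<bar>\<delta> ((g \<otimes>\<^bsub>G\<^esub> k) [^]\<^bsub>G\<^esub> n) a0 - real n * (T g + T k)\<bar> \<le> real n * (2 * d)"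
        unfolding pow_sum[OF gk a0]
      proof (rule sum_dev)
        fix j assume "j < n"
        define z where "z = \<phi> ((g \<otimes>\<^bsub>G\<^esub> k) [^]\<^bsub>G\<^esub> j) a0"
        have z: "z \<in> X" unfolding z_def by (rule img[OF grp.nat_pow_closed[OF gk] a0])
        show "\<bar>\<delta> (g \<otimes>\<^bsub>G\<^esub> k) (\<phi> ((g \<otimes>\<^bsub>G\<^esub> k) [^]\<^bsub>G\<^esub> j) a0) - (T g + T k)\<bar> \<le> 2 * d"
          unfolding z_def[symmetric] comp[OF that z]
          using pw[OF that(1) img[OF that(2) z]] pw[OF that(2) z] by linarith
      qed
    qed
    then show ?thesis by linarith
  qed
  have nz: "T g0 \<noteq> 0"
  proof
    assume T0: "T g0 = 0"
    have bnd: "\<bar>height H (\<phi> (g0 [^]\<^bsub>G\<^esub> n) a1) - height H a1\<bar> \<le> d" for n :: nat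
    proof -
      have "T (g0 [^]\<^bsub>G\<^esub> n) = 0" using hom[OF g0] T0 by simp
      then show ?thesis using pw[OF grp.nat_pow_closed[OF g0] a1, of n] by (simp add: \<delta>_def)
    qed
    have ev: "\<exists>n::nat. \<not> \<bar>height H (\<phi> (g0 [^]\<^bsub>G\<^esub> n) a1) - height H a1\<bar> \<le> d"
    proof -
      obtain Z :: int where Z: "real_of_int Z > d" by (meson reals_Archimedean2 less_trans gt_ex ex_less_of_int)
      from unb show ?thesis
      proof
        assume "filterlim (\<lambda>n::int. height H (\<phi> (g0 [^]\<^bsub>G\<^esub> n) a1)) at_top at_top"
        then have "eventually (\<lambda>n::int. height H (\<phi> (g0 [^]\<^bsub>G\<^esub> n) a1) \<ge> Z + height H a1) at_top"
          by (simp add: filterlim_at_top)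
        then obtain N where N: "\<And>n::int. n \<ge> N \<Longrightarrow> height H (\<phi> (g0 [^]\<^bsub>G\<^esub> n) a1) \<ge> Z + height H a1"
          by (auto simp: eventually_at_top_linorder)
        have "height H (\<phi> (g0 [^]\<^bsub>G\<^esub> (int (nat (max N 0)))) a1) \<ge> Z + height H a1" by (rule N) simp
        then have "height H (\<phi> (g0 [^]\<^bsub>G\<^esub> (nat (max N 0))) a1) \<ge> Z + height H a1" by (simp add: int_pow_int)
        then show ?thesis using Z by (intro exI[of _ "nat (max N 0)"]) linarith
      next
        assume "filterlim (\<lambda>n::int. height H (\<phi> (g0 [^]\<^bsub>G\<^esub> n) a1)) at_bot at_top"
        then have "eventually (\<lambda>n::int. height H (\<phi> (g0 [^]\<^bsub>G\<^esub> n) a1) \<le> - Z + height H a1) at_top"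
          by (simp add: filterlim_at_bot)
        then obtain N where N: "\<And>n::int. n \<ge> N \<Longrightarrow> height H (\<phi> (g0 [^]\<^bsub>G\<^esub> n) a1) \<le> - Z + height H a1"
          by (auto simp: eventually_at_top_linorder)
        have "height H (\<phi> (g0 [^]\<^bsub>G\<^esub> (int (nat (max N 0)))) a1) \<le> - Z + height H a1" by (rule N) simp
        then have "height H (\<phi> (g0 [^]\<^bsub>G\<^esub> (nat (max N 0))) a1) \<le> - Z + height H a1" by (simp add: int_pow_int)
        then show ?thesis using Z by (intro exI[of _ "nat (max N 0)"]) linarith
      qed
    qed
    then show False using bnd by blast
  qed
  show ?thesis
  proof (intro exI conjI ballI)
    show "homogeneous_quasimorphism_defect_le G T (2 * d)"
      unfolding homogeneous_quasimorphism_defect_le_def using defect hom by blast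
    show "\<exists>g\<in>carrier G. T g \<noteq> 0" using g0 nz by blast
    fix a g assume "a \<in> X" "g \<in> carrier G"
    then show "(\<lambda>n::nat. real_of_int (rel_height H (\<phi> (g [^]\<^bsub>G\<^esub> n) a) a) / real n) \<longlonglongrightarrow> T g"
      using conv_all unfolding rel_height_def \<delta>_def by simp
  qed
qed

end
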